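(* Assume the variety $\mathbf K$ axiomatized by $E$ satisfies (IT), is coherent and has the $\forall$-factorization property. Let $X,C$ be finite sets, $\mathcal A^*\in\mathsf{Sub}_r(\mathbf F(X)^*\times\mathbf F(C)^* )$, and let $\mathcal B_1^*,\dots,\mathcal B_n^*\in\mathsf{Sub}_r(\mathbf F(X)^* )$ be such that (a) $\pi_{\mathbf F(X)^*}^{-1}(\mathcal B_i^* )\le\mathcal A^*$ for all $i$, and (b) for every $\mathcal D^*\in\mathsf{Sub}_r(\mathbf F(X)^* )$ with $\pi_{\mathbf F(X)^*}^{-1}(\mathcal D^* )\le\mathcal A^*$ there is $i$ with $\mathcal D^*\le\mathcal B_i^*$. Then a homomorphism $\sigma:\mathbf F(X)\to\mathbf F(Z)$ is a $C$-unifier of $(\mathcal A,C)$ iff it is a unifier of some $\mathcal B_i$; that is, $U^{svr}_E(\mathcal A,C)=U_E(\mathcal B_1)\cup\dots\cup U_E(\mathcal B_n)$, as preordered sets (with the same preorder).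
   Context: $\mathbf F(Y)$ is the free $E$-algebra on finite $Y$; $\mathsf{Alg}^{op}_{fp}(E)$ is the opposite of the category of finitely presented $E$-algebras ($\mathcal B^*,f^*$ formal duals). $\mathsf{Sub}_r(V)$ is the poset of regular subobjects, $g^{-1}$ pullback, $\pi$ projections; regular subobjects of $\mathcal B^*$ correspond to finitely presented quotients of $\mathcal B$. (IT): whenever $f:\mathcal A\to\mathcal B$ is a homomorphism and $g:\mathcal A\to\mathcal C$ an injective homomorphism, there exist a homomorphism $h:\mathcal C\to\mathcal E$ and injective $h':\mathcal B\to\mathcal E$ with $h'f=hg$. Coherent: finitely generated subalgebras of finitely presented algebras are finitely presented. $\forall$-factorization property: for all objects $V,W$ of $\mathsf{Alg}^{op}_{fp}(E)$ and $T\in\mathsf{Sub}_r(V\times W)$ there are finitely many $B_1,\dots,B_n\in\mathsf{Sub}_r(W)$ with $\pi_W^{-1}(B_i)\le T$ and such that every $D\in\mathsf{Sub}_r(W)$ with $\pi_W^{-1}(D)\le T$ satisfies $D\le B_i$ for some $i$. A $C$-unifier of $(\mathcal A,C)$ is a homomorphism $\sigma:\mathbf F(X)\to\mathbf F(Z)$ with $\sigma^*\times1:\mathbf F(Z)^*\times\mathbf F(C)^*\to\mathbf F(X)^*\times\mathbf F(C)^*$ factoring through $\mathcal A^*\hookrightarrow\mathbf F(X)^*\times\mathbf F(C)^*$; $U^{svr}_E(\mathcal A,C)$ is the set of these. A unifier of $\mathcal B_i$ (case $C=\emptyset$) is a homomorphism $\sigma:\mathbf F(X)\to\mathbf F(Z)$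 factoring through the quotient map $\mathbf F(X)\to\mathcal B_i$; $U_E(\mathcal B_i)$ is the set of these. In both sets, $\gamma:\mathbf F(X)\to\mathbf F(W)$ is below $\sigma:\mathbf F(X)\to\mathbf F(Z)$ iff $k\circ\sigma=\gamma$ for some homomorphism $k:\mathbf F(Z)\to\mathbf F(W)$. *)

theory Defs
  imports Main
begin

datatype ('f, 'v) trm = Var 'v | Fun 'f "('f, 'v) trm list"

fun wf :: "('f \<Rightarrow> nat) \<Rightarrow> ('f, 'v) trm \<Rightarrow> bool" where
  "wf ar (Var x) = True"
| "wf ar (Fun f ts) = (length ts = ar f \<and> (\<forall>t\<in>set ts. wf ar t))"

fun vars :: "('f, 'v) trm \<Rightarrow> 'v set" where
  "vars (Var x) = {x}"
| "vars (Fun f ts) = \<Union> (vars ` set ts)"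

fun subst :: "('v \<Rightarrow> ('f, 'w) trm) \<Rightarrow> ('f, 'v) trm \<Rightarrow> ('f, 'w) trm" where
  "subst \<sigma> (Var x) = \<sigma> x"
| "subst \<sigma> (Fun f ts) = Fun f (map (subst \<sigma>) ts)"

definition eqs_wf :: "('f \<Rightarrow> nat) \<Rightarrow> (('f, 'v) trm \<times> ('f, 'v) trm) set \<Rightarrow> bool" where
  "eqs_wf ar E \<equiv> (\<forall>(l, r)\<in>E. wf ar l \<and> wf ar r)"

definition pres :: "('f \<Rightarrow> nat) \<Rightarrow> 'y set \<Rightarrow> (('f, 'y) trm \<times> ('f, 'y) trm) set \<Rightarrow> bool" where
  "pres ar Y R \<equiv> finite R \<and> (\<forall>(s, t)\<in>R. wf ar s \<and> wf ar t \<and> vars s \<subseteq> Y \<and> vars t \<subseteq> Y)"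

text \<open>The congruence on the term algebra generated by all E-instances and the pairs R.
  Its restriction to terms over Y is the kernel of the quotient map F(Y) -> F(Y)/Cg(R).
  With R = {} it is E-equivalence, i.e. the kernel of the map onto the free algebra.\<close>
inductive eqr :: "('f \<Rightarrow> nat) \<Rightarrow> (('f, 'v) trm \<times> ('f, 'v) trm) set
    \<Rightarrow> (('f, 'y) trm \<times> ('f, 'y) trm) set \<Rightarrow> ('f, 'y) trm \<Rightarrow> ('f, 'y) trm \<Rightarrow> bool"
  for ar E R where
  base: "(s, t) \<in> R \<Longrightarrow> eqr ar E R s t"
| ax: "(l, r) \<in> E \<Longrightarrow> (\<forall>x. wf ar (\<sigma> x)) \<Longrightarrow> eqr ar E R (subst \<sigma> l) (subst \<sigma> r)"
| refl: "wf ar t \<Longrightarrow> eqr ar E R t t"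
| sym: "eqr ar E R s t \<Longrightarrow> eqr ar E R t s"
| trans: "eqr ar E R s t \<Longrightarrow> eqr ar E R t u \<Longrightarrow> eqr ar E R s u"
| cong: "length ss = ar f \<Longrightarrow> length ts = ar f \<Longrightarrow> list_all2 (eqr ar E R) ss ts
          \<Longrightarrow> eqr ar E R (Fun f ss) (Fun f ts)"

definition ren_l :: "('f, 'x) trm \<Rightarrow> ('f, 'x + 'y) trm" where
  "ren_l t = subst (Var \<circ> Inl) t"

definition ren_r :: "('f, 'y) trm \<Rightarrow> ('f, 'x + 'y) trm" where
  "ren_r t = subst (Var \<circ> Inr) t"

definition ren_l_rel :: "(('f, 'x) trm \<times> ('f, 'x) trm) set \<Rightarrow> (('f, 'x + 'y) trm \<times> ('f, 'x + 'y) trm) set" where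
  "ren_l_rel R = (\<lambda>(s, t). (ren_l s, ren_l t)) ` R"

definition ren_r_rel :: "(('f, 'y) trm \<times> ('f, 'y) trm) set \<Rightarrow> (('f, 'x + 'y) trm \<times> ('f, 'x + 'y) trm) set" where
  "ren_r_rel R = (\<lambda>(s, t). (ren_r s, ren_r t)) ` R"

text \<open>Over the finitely presented algebra presented by
  relations Base, the regular subobject given by the finitely presented quotient with
  extra relations D is below the one given by extra relations B (D* \<le> B*) iff the
  congruence of B is contained in that of D.\<close>
definition sub_le :: "('f \<Rightarrow> nat) \<Rightarrow> (('f, 'v) trm \<times> ('f, 'v) trm) set
    \<Rightarrow> (('f, 'y) trm \<times> ('f, 'y) trm) set \<Rightarrow> (('f, 'y) trm \<times> ('f, 'y) trm) set
    \<Rightarrow> (('f, 'y) trm \<times> ('f, 'y) trm) set \<Rightarrow> bool" where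
  "sub_le ar E Base D B \<equiv> (\<forall>(s, t)\<in>B. eqr ar E (Base \<union> D) s t)"

type_synonym ('f, 'a) alg = "'a set \<times> ('f \<Rightarrow> 'a list \<Rightarrow> 'a)"

definition is_alg :: "('f \<Rightarrow> nat) \<Rightarrow> ('f, 'a) alg \<Rightarrow> bool" where
  "is_alg ar A \<equiv> (\<forall>f as. length as = ar f \<and> set as \<subseteq> fst A \<longrightarrow> snd A f as \<in> fst A)"

fun eval :: "('f, 'a) alg \<Rightarrow> ('v \<Rightarrow> 'a) \<Rightarrow> ('f, 'v) trm \<Rightarrow> 'a" where
  "eval A \<alpha> (Var x) = \<alpha> x"
| "eval A \<alpha> (Fun f ts) = snd A f (map (eval A \<alpha>) ts)"

definition inK :: "('f \<Rightarrow> nat) \<Rightarrow> (('f, 'v) trm \<times> ('f, 'v) trm) set \<Rightarrow> ('f, 'a) alg \<Rightarrow> bool" where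
  "inK ar E A \<equiv> is_alg ar A \<and>
     (\<forall>(l, r)\<in>E. \<forall>\<alpha>. (\<forall>x. \<alpha> x \<in> fst A) \<longrightarrow> eval A \<alpha> l = eval A \<alpha> r)"

definition hom :: "('f \<Rightarrow> nat) \<Rightarrow> ('f, 'a) alg \<Rightarrow> ('f, 'b) alg \<Rightarrow> ('a \<Rightarrow> 'b) \<Rightarrow> bool" where
  "hom ar A B h \<equiv> (\<forall>a\<in>fst A. h a \<in> fst B) \<and>
     (\<forall>f as. length as = ar f \<and> set as \<subseteq> fst A \<longrightarrow> h (snd A f as) = snd B f (map h as))"

text \<open>(IT) for the algebras of K whose carriers live in the universe type 'u.\<close>
definition IT :: "('f \<Rightarrow> nat) \<Rightarrow> (('f, 'v) trm \<times> ('f, 'v) trm) set \<Rightarrow> 'u itself \<Rightarrow> bool" where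
  "IT ar E U \<equiv> (\<forall>(A :: ('f, 'u) alg) (B :: ('f, 'u) alg) (C :: ('f, 'u) alg) f g.
      inK ar E A \<and> inK ar E B \<and> inK ar E C \<and> hom ar A B f \<and> hom ar A C g \<and> inj_on g (fst A)
      \<longrightarrow> (\<exists>(D :: ('f, 'u) alg) h h'. inK ar E D \<and> hom ar C D h \<and> hom ar B D h' \<and>
              inj_on h' (fst B) \<and> (\<forall>a\<in>fst A. h' (f a) = h (g a))))"

definition cls :: "('f \<Rightarrow> nat) \<Rightarrow> (('f, 'v) trm \<times> ('f, 'v) trm) set
    \<Rightarrow> (('f, 'y) trm \<times> ('f, 'y) trm) set \<Rightarrow> ('f, 'y) trm \<Rightarrow> ('f, 'y) trm set" where
  "cls ar E R t = {u. eqr ar E R t u}"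

text \<open>The finitely presented algebra F(Y)/Cg(R), realised on congruence classes.\<close>
definition Q :: "('f \<Rightarrow> nat) \<Rightarrow> (('f, 'v) trm \<times> ('f, 'v) trm) set \<Rightarrow> 'y set
    \<Rightarrow> (('f, 'y) trm \<times> ('f, 'y) trm) set \<Rightarrow> ('f, ('f, 'y) trm set) alg" where
  "Q ar E Y R = ({cls ar E R t | t. wf ar t \<and> vars t \<subseteq> Y},
                 (\<lambda>f Ls. cls ar E R (Fun f (map (\<lambda>L. SOME t. t \<in> L) Ls))))"

inductive_set gen :: "('f \<Rightarrow> nat) \<Rightarrow> ('f, 'a) alg \<Rightarrow> 'a set \<Rightarrow> 'a set" for ar A G where
  gen_base: "a \<in> G \<Longrightarrow> a \<in> gen ar A G"
| gen_op: "length as = ar f \<Longrightarrow> (\<forall>a\<in>set as. a \<in> gen ar A G) \<Longrightarrow> snd A f as \<in> gen ar A G"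

definition fin_pres :: "('f \<Rightarrow> nat) \<Rightarrow> (('f, 'v) trm \<times> ('f, 'v) trm) set \<Rightarrow> ('f, 'a) alg \<Rightarrow> bool" where
  "fin_pres ar E A \<equiv> (\<exists>(Y :: nat set) R h. finite Y \<and> pres ar Y R \<and>
      hom ar (Q ar E Y R) A h \<and> bij_betw h (fst (Q ar E Y R)) (fst A))"

text \<open>Coherence: finitely generated subalgebras of finitely presented algebras are
  finitely presented (every finitely presented algebra is isomorphic to some Q Y R with
  Y a finite set of naturals).\<close>
definition coherent :: "('f \<Rightarrow> nat) \<Rightarrow> (('f, 'v) trm \<times> ('f, 'v) trm) set \<Rightarrow> bool" where
  "coherent ar E \<equiv> (\<forall>(Y :: nat set) R G. finite Y \<and> pres ar Y R \<and> finite G \<and> G \<subseteq> fst (Q ar E Y R)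
      \<longrightarrow> fin_pres ar E (gen ar (Q ar E Y R) G, snd (Q ar E Y R)))"

text \<open>Objects V, W of Alg_fp^op are presented by (Y1,R1), (Y2,R2); V x W is the
  coproduct algebra presented by (Inl`Y1 \<union> Inr`Y2, R1' \<union> R2'); its regular subobjects
  are the finitely presented quotients, given by extra finite relations T; pulling back
  the subobject of W given by D along pi_W gives extra relations D'.\<close>
definition forall_fact :: "('f \<Rightarrow> nat) \<Rightarrow> (('f, 'v) trm \<times> ('f, 'v) trm) set \<Rightarrow> bool" where
  "forall_fact ar E \<equiv> (\<forall>(Y1 :: nat set) (Y2 :: nat set) R1 R2 T.
      finite Y1 \<and> finite Y2 \<and> pres ar Y1 R1 \<and> pres ar Y2 R2 \<and> pres ar (Inl ` Y1 \<union> Inr ` Y2) T \<longrightarrow>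
      (\<exists>Bs. (\<forall>B\<in>set Bs. pres ar Y2 B \<and>
                sub_le ar E (ren_l_rel R1 \<union> ren_r_rel R2) (ren_r_rel B) T) \<and>
            (\<forall>D. pres ar Y2 D \<and> sub_le ar E (ren_l_rel R1 \<union> ren_r_rel R2) (ren_r_rel D) T
                 \<longrightarrow> (\<exists>B\<in>set Bs. sub_le ar E R2 D B))))"

text \<open>A homomorphism F(X) -> F(Z) is given by a substitution sigma with sigma x a
  well-formed term over Z for x in X. sigma* x 1 is dual to the homomorphism
  F(X+C) -> F(Z+C) extending sigma by the identity on C; it factors through
  A* iff that homomorphism kills the relations of A.\<close>
definition C_unifier :: "('f \<Rightarrow> nat) \<Rightarrow> (('f, 'v) trm \<times> ('f, 'v) trm) set
    \<Rightarrow> (('f, 'x + 'x) trm \<times> ('f, 'x + 'x) trm) set \<Rightarrow> ('x \<Rightarrow> ('f, 'z) trm) \<Rightarrow> bool" where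
  "C_unifier ar E RA \<sigma> \<equiv>
     (let \<tau> = case_sum (\<lambda>x. ren_l (\<sigma> x)) (\<lambda>c. Var (Inr c)) :: 'x + 'x \<Rightarrow> ('f, 'z + 'x) trm
      in \<forall>(s, t)\<in>RA. eqr ar E ({} :: (('f, 'z + 'x) trm \<times> ('f, 'z + 'x) trm) set) (subst \<tau> s) (subst \<tau> t))"

definition unifier :: "('f \<Rightarrow> nat) \<Rightarrow> (('f, 'v) trm \<times> ('f, 'v) trm) set
    \<Rightarrow> (('f, 'x) trm \<times> ('f, 'x) trm) set \<Rightarrow> ('x \<Rightarrow> ('f, 'z) trm) \<Rightarrow> bool" where
  "unifier ar E B \<sigma> \<equiv>
     (\<forall>(s, t)\<in>B. eqr ar E ({} :: (('f, 'z) trm \<times> ('f, 'z) trm) set) (subst \<sigma> s) (subst \<sigma> t))"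

end

theory Submission imports Defs begin

lemma subst_subst: "subst \<theta> (subst \<sigma> t) = subst (subst \<theta> \<circ> \<sigma>) t"
  by (induction t) auto

lemma subst_cong: "(\<And>x. x \<in> vars t \<Longrightarrow> \<theta>1 x = \<theta>2 x) \<Longrightarrow> subst \<theta>1 t = subst \<theta>2 t"
  by (induction t) auto

lemma subst_Var: "subst Var t = t"
  by (induction t) (auto simp: map_idI)

lemma wf_subst: "wf ar t \<Longrightarrow> (\<And>x. x \<in> vars t \<Longrightarrow> wf ar (\<theta> x)) \<Longrightarrow> wf ar (subst \<theta> t)"
  by (induction t) auto

lemma vars_subst: "vars (subst \<theta> t) = (\<Union>x\<in>vars t. vars (\<theta> x))"
  by (induction t) auto

lemma eqr_subst:
  assumes "eqr ar E R s t" "\<And>x. wf ar (\<theta> x)"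
    "\<And>a b. (a, b) \<in> R \<Longrightarrow> eqr ar E R' (subst \<theta> a) (subst \<theta> b)"
  shows "eqr ar E R' (subst \<theta> s) (subst \<theta> t)"
  using assms(1)
proof (induction rule: eqr.induct)
  case (base s t) then show ?case using assms(3) by blast
next
  case (ax l r \<sigma>)
  have "eqr ar E R' (subst (subst \<theta> \<circ> \<sigma>) l) (subst (subst \<theta> \<circ> \<sigma>) r)"
    by (rule eqr.ax) (use ax assms(2) in \<open>auto intro!: wf_subst\<close>)
  then show ?case by (simp add: subst_subst)
next
  case (refl t) then show ?case by (intro eqr.refl wf_subst) (auto simp: assms(2))
next
  case (sym s t) then show ?case by (blast intro: eqr.sym)
next
  case (trans s t u) then show ?case by (blast intro: eqr.trans)
next
  case (cong ss f ts)
  have "list_all2 (eqr ar E R') (map (subst \<theta>) ss) (map (subst \<theta>) ts)"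
    using cong(3) by (auto simp: list_all2_map1 list_all2_map2 elim: list_all2_mono)
  then show ?case using cong by (auto intro: eqr.cong)
qed

lemma eqr_mono: "eqr ar E R s t \<Longrightarrow> R \<subseteq> R' \<Longrightarrow> eqr ar E R' s t"
proof (induction rule: eqr.induct)
  case (cong ss f ts)
  then show ?case by (auto intro!: eqr.cong elim: list_all2_mono)
qed (auto intro: eqr.intros)

lemma eqr_wf:
  assumes "eqs_wf ar E" "\<And>a b. (a, b) \<in> R \<Longrightarrow> wf ar a \<and> wf ar b"
  shows "eqr ar E R s t \<Longrightarrow> wf ar s \<and> wf ar t"
proof (induction rule: eqr.induct)
  case (ax l r \<sigma>)
  then show ?case using assms(1) unfolding eqs_wf_def by (auto intro!: wf_subst)
next
  case (cong ss f ts)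
  then show ?case by (auto simp: list_all2_conv_all_nth in_set_conv_nth)
qed (use assms(2) in auto)

lemma eqr_compact:
  "eqr ar E R s t \<Longrightarrow> \<exists>R0. finite R0 \<and> R0 \<subseteq> R \<and> eqr ar E R0 s t"
proof (induction rule: eqr.induct)
  case (base s t) then show ?case by (intro exI[of _ "{(s,t)}"]) (auto intro: eqr.base)
next
  case (ax l r \<sigma>) then show ?case by (intro exI[of _ "{}"]) (auto intro: eqr.ax)
next
  case (refl t) then show ?case by (intro exI[of _ "{}"]) (auto intro: eqr.refl)
next
  case (sym s t) then show ?case by (blast intro: eqr.sym)
next
  case (trans s t u)
  then obtain R1 R2 where "finite R1" "R1 \<subseteq> R" "eqr ar E R1 s t" "finite R2" "R2 \<subseteq> R" "eqr ar E R2 t u"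
    by blast
  then show ?case
    by (intro exI[of _ "R1 \<union> R2"]) (auto intro: eqr.trans eqr_mono)
next
  case (cong ss f ts)
  have "list_all2 (\<lambda>x1 x2. eqr ar E R x1 x2 \<and> (\<exists>R0. finite R0 \<and> R0 \<subseteq> R \<and> eqr ar E R0 x1 x2)) ss ts
     \<Longrightarrow> \<exists>R0. finite R0 \<and> R0 \<subseteq> R \<and> list_all2 (eqr ar E R0) ss ts" for ss ts
  proof (induction rule: list_all2_induct)
    case Nil then show ?case by auto
  next
    case (Cons x xs y ys)
    then obtain R1 R2 where "finite R1" "R1 \<subseteq> R" "eqr ar E R1 x y" "finite R2" "R2 \<subseteq> R"
      "list_all2 (eqr ar E R2) xs ys" by blast
    then show ?case
      by (intro exI[of _ "R1 \<union> R2"]) (auto intro: eqr_mono elim: list_all2_mono)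
  qed
  then obtain R0 where "finite R0" "R0 \<subseteq> R" "list_all2 (eqr ar E R0) ss ts" using cong(3) by blast
  then show ?case using cong by (auto intro: eqr.cong)
qed

lemma eval_subst: "eval A \<beta> (subst \<theta> t) = eval A (\<lambda>x. eval A \<beta> (\<theta> x)) t"
proof (induction t)
  case (Fun f ts)
  then have "map (eval A \<beta> \<circ> subst \<theta>) ts = map (eval A (\<lambda>x. eval A \<beta> (\<theta> x))) ts" by (auto simp: comp_def)
  then show ?case by (simp only: eval.simps subst.simps map_map)
qed simp

lemma eval_cong: "(\<And>x. x \<in> vars t \<Longrightarrow> \<beta>1 x = \<beta>2 x) \<Longrightarrow> eval A \<beta>1 t = eval A \<beta>2 t"
proof (induction t)
  case (Fun f ts)
  then have "map (eval A \<beta>1) ts = map (eval A \<beta>2) ts" by auto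
  then show ?case by (metis eval.simps(2))
qed simp

lemma eval_carrier: "is_alg ar A \<Longrightarrow> wf ar t \<Longrightarrow> (\<And>x. x \<in> vars t \<Longrightarrow> \<beta> x \<in> fst A) \<Longrightarrow> eval A \<beta> t \<in> fst A"
proof (induction t)
  case (Fun f ts)
  then have "set (map (eval A \<beta>) ts) \<subseteq> fst A" by auto
  then show ?case using Fun.prems unfolding is_alg_def by auto
qed simp

lemma hom_eval: "hom ar A B h \<Longrightarrow> is_alg ar A \<Longrightarrow> wf ar t \<Longrightarrow> (\<And>x. x \<in> vars t \<Longrightarrow> \<beta> x \<in> fst A)
  \<Longrightarrow> h (eval A \<beta> t) = eval B (\<lambda>x. h (\<beta> x)) t"
proof (induction t)
  case (Fun f ts)
  have "set (map (eval A \<beta>) ts) \<subseteq> fst A"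
    using Fun.prems by (auto intro!: eval_carrier)
  then have "h (eval A \<beta> (Fun f ts)) = snd B f (map h (map (eval A \<beta>) ts))"
    using Fun.prems unfolding hom_def by auto
  also have "map h (map (eval A \<beta>) ts) = map (eval B (\<lambda>x. h (\<beta> x))) ts"
    using Fun by (auto simp: comp_def)
  finally show ?case by (simp only: eval.simps)
qed simp

lemma sound:
  assumes "inK ar E D" "\<And>x. \<beta> x \<in> fst D"
  shows "eqr ar E {} s t \<Longrightarrow> eval D \<beta> s = eval D \<beta> t"
proof (induction rule: eqr.induct)
  case (ax l r \<sigma>)
  have alg: "is_alg ar D" using assms(1) unfolding inK_def by simp
  have "\<forall>x. eval D \<beta> (\<sigma> x) \<in> fst D"
    using ax(2) by (auto intro!: eval_carrier[OF alg] assms(2))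
  then have "eval D (\<lambda>x. eval D \<beta> (\<sigma> x)) l = eval D (\<lambda>x. eval D \<beta> (\<sigma> x)) r"
  proof -
    have "\<forall>(l, r)\<in>E. \<forall>\<alpha>. (\<forall>x. \<alpha> x \<in> fst D) \<longrightarrow> eval D \<alpha> l = eval D \<alpha> r"
      using assms(1) unfolding inK_def by simp
    then have "\<forall>\<alpha>. (\<forall>x. \<alpha> x \<in> fst D) \<longrightarrow> eval D \<alpha> l = eval D \<alpha> r"
      using ax(1) by (simp add: Ball_def split_def)
    then show ?thesis using \<open>\<forall>x. eval D \<beta> (\<sigma> x) \<in> fst D\<close>
      by (auto dest: spec[of _ "\<lambda>x. eval D \<beta> (\<sigma> x)"])
  qed
  then show ?case by (simp only: eval_subst)
next
  case (cong ss f ts)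
  then have "map (eval D \<beta>) ss = map (eval D \<beta>) ts"
    by (auto simp: list_all2_conv_all_nth intro: nth_equalityI)
  then show ?case by simp
qed auto


definition good :: "('f \<Rightarrow> nat) \<Rightarrow> (('f, 'v) trm \<times> ('f, 'v) trm) set \<Rightarrow> (('f, 'y) trm \<times> ('f, 'y) trm) set \<Rightarrow> bool" where
  "good ar E R \<equiv> eqs_wf ar E \<and> (\<forall>(a, b)\<in>R. wf ar a \<and> wf ar b)"

definition rep :: "('f \<Rightarrow> nat) \<Rightarrow> (('f, 'v) trm \<times> ('f, 'v) trm) set \<Rightarrow> (('f, 'y) trm \<times> ('f, 'y) trm) set
   \<Rightarrow> 'y set \<Rightarrow> ('f, 'y) trm \<Rightarrow> ('f, 'y) trm" where
  "rep ar E R V t = (SOME u. eqr ar E R t u \<and> wf ar u \<and> vars u \<subseteq> V)"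

definition enc :: "('f \<Rightarrow> nat) \<Rightarrow> (('f, 'v) trm \<times> ('f, 'v) trm) set \<Rightarrow> (('f, 'y) trm \<times> ('f, 'y) trm) set
   \<Rightarrow> 'y set \<Rightarrow> ('y \<Rightarrow> nat) \<Rightarrow> ('f, 'y) trm \<Rightarrow> ('f, nat) trm" where
  "enc ar E R V e t = subst (Var \<circ> e) (rep ar E R V t)"

definition dec :: "'y set \<Rightarrow> ('y \<Rightarrow> nat) \<Rightarrow> ('f, nat) trm \<Rightarrow> ('f, 'y) trm" where
  "dec V e a = subst (\<lambda>n. Var (inv_into V e n)) a"

definition QA :: "('f \<Rightarrow> nat) \<Rightarrow> (('f, 'v) trm \<times> ('f, 'v) trm) set \<Rightarrow> (('f, 'y) trm \<times> ('f, 'y) trm) set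
   \<Rightarrow> 'y set \<Rightarrow> ('y \<Rightarrow> nat) \<Rightarrow> ('f, ('f, nat) trm) alg" where
  "QA ar E R V e = ({enc ar E R V e t | t. wf ar t \<and> vars t \<subseteq> V},
      \<lambda>f as. enc ar E R V e (Fun f (map (dec V e) as)))"

lemma good_wf: "good ar E R \<Longrightarrow> eqr ar E R s t \<Longrightarrow> wf ar s \<and> wf ar t"
  unfolding good_def by (rule eqr_wf) auto

lemma rep_props:
  assumes "wf ar t" "vars t \<subseteq> V"
  shows "eqr ar E R t (rep ar E R V t) \<and> wf ar (rep ar E R V t) \<and> vars (rep ar E R V t) \<subseteq> V"
  unfolding rep_def by (rule someI[of _ t]) (use assms in \<open>auto intro: eqr.refl\<close>)

lemma rep_eq:
  assumes "eqr ar E R s t"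
  shows "rep ar E R V s = rep ar E R V t"
proof -
  have "(\<lambda>u. eqr ar E R s u \<and> wf ar u \<and> vars u \<subseteq> V) = (\<lambda>u. eqr ar E R t u \<and> wf ar u \<and> vars u \<subseteq> V)"
    using assms by (auto intro: eqr.trans eqr.sym)
  then show ?thesis unfolding rep_def by simp
qed

lemma dec_ren: "inj_on e V \<Longrightarrow> vars u \<subseteq> V \<Longrightarrow> dec V e (subst (Var \<circ> e) u) = u"
proof -
  assume a: "inj_on e V" "vars u \<subseteq> V"
  have "dec V e (subst (Var \<circ> e) u) = subst Var u"
    unfolding dec_def subst_subst by (rule subst_cong) (use a in auto)
  then show ?thesis by (simp add: subst_Var)
qed

lemma dec_enc: "inj_on e V \<Longrightarrow> wf ar t \<Longrightarrow> vars t \<subseteq> V \<Longrightarrow> dec V e (enc ar E R V e t) = rep ar E R V t"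
  unfolding enc_def by (rule dec_ren) (use rep_props[of ar t V E R] in auto)

lemma enc_eq_iff:
  assumes "inj_on e V" "wf ar s" "vars s \<subseteq> V" "wf ar t" "vars t \<subseteq> V"
  shows "enc ar E R V e s = enc ar E R V e t \<longleftrightarrow> eqr ar E R s t"
proof
  assume "enc ar E R V e s = enc ar E R V e t"
  then have "rep ar E R V s = rep ar E R V t" using dec_enc assms by metis
  then show "eqr ar E R s t" using rep_props[of ar s V E R] rep_props[of ar t V E R] assms
    by (metis eqr.sym eqr.trans)
qed (simp add: enc_def rep_eq)

lemma enc_rep: "wf ar t \<Longrightarrow> vars t \<subseteq> V \<Longrightarrow> enc ar E R V e (rep ar E R V t) = enc ar E R V e t"
  unfolding enc_def using rep_props rep_eq eqr.sym by metis

lemma QA_op: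
  assumes "inj_on e V" "length ts = ar f" "\<forall>t\<in>set ts. wf ar t \<and> vars t \<subseteq> V"
  shows "snd (QA ar E R V e) f (map (enc ar E R V e) ts) = enc ar E R V e (Fun f ts)"
proof -
  have m: "map (dec V e) (map (enc ar E R V e) ts) = map (rep ar E R V) ts"
    using assms(1,3) dec_enc by (induction ts) auto
  have "list_all2 (eqr ar E R) (map (rep ar E R V) ts) ts"
    using assms(3) by (auto simp: list_all2_conv_all_nth intro!: eqr.sym[OF conjunct1[OF rep_props]])
  then have "eqr ar E R (Fun f (map (rep ar E R V) ts)) (Fun f ts)"
    using assms(2) by (intro eqr.cong) auto
  moreover have "snd (QA ar E R V e) f (map (enc ar E R V e) ts) = enc ar E R V e (Fun f (map (rep ar E R V) ts))"
    unfolding QA_def snd_conv m ..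
  ultimately show ?thesis by (simp add: enc_def rep_eq)
qed

lemma QA_carrier_enc: "a \<in> fst (QA ar E R V e) \<Longrightarrow> inj_on e V \<Longrightarrow>
   a = enc ar E R V e (dec V e a) \<and> wf ar (dec V e a) \<and> vars (dec V e a) \<subseteq> V"
proof -
  assume a: "a \<in> fst (QA ar E R V e)" and e: "inj_on e V"
  then obtain t where t: "a = enc ar E R V e t" "wf ar t" "vars t \<subseteq> V" unfolding QA_def by auto
  then have d: "dec V e a = rep ar E R V t" using dec_enc[OF e] by simp
  have "enc ar E R V e (rep ar E R V t) = enc ar E R V e t" by (rule enc_rep[OF t(2,3)])
  moreover have "wf ar (rep ar E R V t) \<and> vars (rep ar E R V t) \<subseteq> V" using rep_props[OF t(2,3)] by blast
  ultimately show ?thesis using t d by simp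
qed

lemma QA_list: "set as \<subseteq> fst (QA ar E R V e) \<Longrightarrow> inj_on e V \<Longrightarrow>
   as = map (enc ar E R V e) (map (dec V e) as) \<and> (\<forall>t\<in>set (map (dec V e) as). wf ar t \<and> vars t \<subseteq> V)"
proof (induction as)
  case (Cons a as)
  then show ?case using QA_carrier_enc[of a ar E R V e] by simp
qed simp

lemma QA_alg:
  assumes "inj_on e V"
  shows "is_alg ar (QA ar E R V e)"
  unfolding is_alg_def
proof (intro allI impI)
  fix f as
  assume a: "length as = ar f \<and> set as \<subseteq> fst (QA ar E R V e)"
  define ts where "ts = map (dec V e) as"
  have ts: "as = map (enc ar E R V e) ts" "\<forall>t\<in>set ts. wf ar t \<and> vars t \<subseteq> V"
    using QA_list[of as ar E R V e] a assms unfolding ts_def by blast+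
  have "length ts = ar f" using a ts by simp
  then have "wf ar (Fun f ts) \<and> vars (Fun f ts) \<subseteq> V" using ts by auto
  moreover have "snd (QA ar E R V e) f as = enc ar E R V e (Fun f ts)"
    unfolding ts(1) by (rule QA_op[OF assms \<open>length ts = ar f\<close> ts(2)])
  ultimately show "snd (QA ar E R V e) f as \<in> fst (QA ar E R V e)"
    unfolding QA_def fst_conv by blast
qed

lemma QA_eval:
  assumes "inj_on e V" "wf ar t" "\<And>x. x \<in> vars t \<Longrightarrow> wf ar (\<theta> x) \<and> vars (\<theta> x) \<subseteq> V"
  shows "eval (QA ar E R V e) (\<lambda>x. enc ar E R V e (\<theta> x)) t = enc ar E R V e (subst \<theta> t)"
  using assms(2,3)
proof (induction t)
  case (Fun f ts)
  have m: "map (eval (QA ar E R V e) (\<lambda>x. enc ar E R V e (\<theta> x))) ts = map (enc ar E R V e) (map (subst \<theta>) ts)"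
    using Fun by auto
  have w: "\<forall>t\<in>set (map (subst \<theta>) ts). wf ar t \<and> vars t \<subseteq> V"
    using Fun.prems by (auto intro!: wf_subst simp: vars_subst)
  have "eval (QA ar E R V e) (\<lambda>x. enc ar E R V e (\<theta> x)) (Fun f ts)
     = snd (QA ar E R V e) f (map (enc ar E R V e) (map (subst \<theta>) ts))"
    by (simp only: eval.simps m)
  also have "\<dots> = enc ar E R V e (Fun f (map (subst \<theta>) ts))"
    by (rule QA_op[OF assms(1)]) (use Fun.prems w in auto)
  finally show ?case by simp
qed simp

lemma QA_inK:
  fixes E :: "(('f, 'v) trm \<times> ('f, 'v) trm) set" and R :: "(('f, 'y) trm \<times> ('f, 'y) trm) set"
  assumes "inj_on e V" "good ar E R"
  shows "inK ar E (QA ar E R V e)"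
  unfolding inK_def
proof (intro conjI QA_alg assms ballI allI impI, clarify)
  fix l r :: "('f, 'v) trm" and \<alpha> :: "'v \<Rightarrow> ('f, nat) trm"
  assume lr: "(l, r) \<in> E" and \<alpha>: "\<forall>x. \<alpha> x \<in> fst (QA ar E R V e)"
  define \<theta> where "\<theta> x = dec V e (\<alpha> x)" for x
  have \<theta>: "\<alpha> x = enc ar E R V e (\<theta> x)" "wf ar (\<theta> x)" "vars (\<theta> x) \<subseteq> V" for x
    using QA_carrier_enc[OF \<alpha>[rule_format] assms(1)] unfolding \<theta>_def by auto
  have wl: "wf ar l" "wf ar r" using lr assms(2) unfolding good_def eqs_wf_def by auto
  have "eqr ar E R (subst \<theta> l) (subst \<theta> r)" using lr \<theta> by (auto intro: eqr.ax)
  then have "enc ar E R V e (subst \<theta> l) = enc ar E R V e (subst \<theta> r)"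
    by (simp add: enc_def rep_eq)
  then show "eval (QA ar E R V e) \<alpha> l = eval (QA ar E R V e) \<alpha> r"
  proof -
    have ae: "\<alpha> = (\<lambda>x. enc ar E R V e (\<theta> x))" by (rule ext) (rule \<theta>(1))
    have "eval (QA ar E R V e) (\<lambda>x. enc ar E R V e (\<theta> x)) l = enc ar E R V e (subst \<theta> l)"
      by (rule QA_eval[OF assms(1) wl(1)]) (use \<theta> in auto)
    moreover have "eval (QA ar E R V e) (\<lambda>x. enc ar E R V e (\<theta> x)) r = enc ar E R V e (subst \<theta> r)"
      by (rule QA_eval[OF assms(1) wl(2)]) (use \<theta> in auto)
    ultimately show ?thesis using \<open>enc ar E R V e (subst \<theta> l) = enc ar E R V e (subst \<theta> r)\<close>
      unfolding ae by simp
  qed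
qed


lemma QA_hom_enc:
  assumes "\<And>x. wf ar (\<theta> x)"
    "\<And>a b. (a, b) \<in> RA \<Longrightarrow> eqr ar E RB (subst \<theta> a) (subst \<theta> b)"
    "inj_on eA VA" "wf ar t" "vars t \<subseteq> VA"
  shows "enc ar E RB VB eB (subst \<theta> (dec VA eA (enc ar E RA VA eA t))) = enc ar E RB VB eB (subst \<theta> t)"
proof -
  have "eqr ar E RA (rep ar E RA VA t) t" using rep_props[OF assms(4,5)] eqr.sym by blast
  then have "eqr ar E RB (subst \<theta> (rep ar E RA VA t)) (subst \<theta> t)"
    using eqr_subst assms(1,2) by blast
  moreover have d: "dec VA eA (enc ar E RA VA eA t) = rep ar E RA VA t" by (rule dec_enc[OF assms(3,4,5)])
  ultimately show ?thesis unfolding d by (simp add: enc_def rep_eq)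
qed

lemma QA_hom:
  assumes "\<And>x. wf ar (\<theta> x)" "\<And>x. x \<in> VA \<Longrightarrow> vars (\<theta> x) \<subseteq> VB"
    "\<And>a b. (a, b) \<in> RA \<Longrightarrow> eqr ar E RB (subst \<theta> a) (subst \<theta> b)"
    "inj_on eA VA" "inj_on eB VB"
  shows "hom ar (QA ar E RA VA eA) (QA ar E RB VB eB) (\<lambda>a. enc ar E RB VB eB (subst \<theta> (dec VA eA a)))"
  unfolding hom_def
proof (intro conjI allI impI ballI)
  fix a assume "a \<in> fst (QA ar E RA VA eA)"
  then have "wf ar (dec VA eA a)" "vars (dec VA eA a) \<subseteq> VA" using QA_carrier_enc assms(4) by blast+
  then have "wf ar (subst \<theta> (dec VA eA a))" "vars (subst \<theta> (dec VA eA a)) \<subseteq> VB"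
    using assms(1,2) by (auto intro!: wf_subst simp: vars_subst)
  then show "enc ar E RB VB eB (subst \<theta> (dec VA eA a)) \<in> fst (QA ar E RB VB eB)"
    unfolding QA_def by auto
next
  fix f as assume a: "length as = ar f \<and> set as \<subseteq> fst (QA ar E RA VA eA)"
  define ts where "ts = map (dec VA eA) as"
  have ts: "as = map (enc ar E RA VA eA) ts" "\<forall>t\<in>set ts. wf ar t \<and> vars t \<subseteq> VA"
    using QA_list[of as] a assms(4) unfolding ts_def by blast+
  have len: "length ts = ar f" using a ts by simp
  have w: "\<forall>t\<in>set (map (subst \<theta>) ts). wf ar t \<and> vars t \<subseteq> VB"
    using ts(2) assms(1,2) by (auto intro!: wf_subst simp: vars_subst) (meson subsetD)
  have "snd (QA ar E RA VA eA) f as = enc ar E RA VA eA (Fun f ts)"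
    unfolding ts(1) by (rule QA_op[OF assms(4) len ts(2)])
  have l: "enc ar E RB VB eB (subst \<theta> (dec VA eA (snd (QA ar E RA VA eA) f as)))
      = enc ar E RB VB eB (Fun f (map (subst \<theta>) ts))"
  proof -
    have "enc ar E RB VB eB (subst \<theta> (dec VA eA (enc ar E RA VA eA (Fun f ts))))
        = enc ar E RB VB eB (subst \<theta> (Fun f ts))"
      by (rule QA_hom_enc[where RA=RA and RB=RB]) (use assms(1,3,4) ts(2) len in auto)
    then show ?thesis using \<open>snd (QA ar E RA VA eA) f as = enc ar E RA VA eA (Fun f ts)\<close> by simp
  qed
  have m: "map (\<lambda>a. enc ar E RB VB eB (subst \<theta> (dec VA eA a))) as = map (enc ar E RB VB eB) (map (subst \<theta>) ts)"
    unfolding ts(1) map_map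
  proof (rule map_cong[OF HOL.refl])
    fix t assume "t \<in> set ts"
    show "((\<lambda>a. enc ar E RB VB eB (subst \<theta> (dec VA eA a))) \<circ> enc ar E RA VA eA) t =
      (enc ar E RB VB eB \<circ> subst \<theta>) t"
      unfolding comp_def
      by (rule QA_hom_enc[where RA=RA and RB=RB]) (use assms(1,3,4) ts(2) \<open>t \<in> set ts\<close> in auto)
  qed
  have o: "snd (QA ar E RB VB eB) f (map (enc ar E RB VB eB) (map (subst \<theta>) ts))
     = enc ar E RB VB eB (Fun f (map (subst \<theta>) ts))"
    by (rule QA_op[OF assms(5)]) (use len w in auto)
  show "enc ar E RB VB eB (subst \<theta> (dec VA eA (snd (QA ar E RA VA eA) f as))) =
         snd (QA ar E RB VB eB) f (map (\<lambda>a. enc ar E RB VB eB (subst \<theta> (dec VA eA a))) as)"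
    unfolding m o l ..
qed


lemma ren_l_inv: "subst (case_sum Var (\<lambda>_. Var undefined)) (ren_l u) = u"
  unfolding ren_l_def subst_subst by (subst subst_Var[symmetric, of u], rule subst_cong) auto

lemma ren_l_inj: "inj ren_l"
  by (metis injI ren_l_inv)

lemma wf_ren_l: "wf ar u \<Longrightarrow> wf ar (ren_l u)"
  unfolding ren_l_def by (auto intro: wf_subst)

lemma vars_ren_l: "vars (ren_l u) = Inl ` vars u"
  unfolding ren_l_def by (auto simp: vars_subst)

lemma key:
  fixes ar :: "'f \<Rightarrow> nat" and E :: "(('f, 'v) trm \<times> ('f, 'v) trm) set"
    and X C :: "'x set" and Z :: "'z set" and \<sigma> :: "'x \<Rightarrow> ('f, 'z) trm"
    and s t :: "('f, 'x + 'x) trm"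
  assumes E: "eqs_wf ar E" and IT: "IT ar E TYPE(('f, nat) trm)"
    and fin: "finite X" "finite C" "finite Z"
    and \<sigma>: "\<And>x. wf ar (\<sigma> x)" "\<And>x. x \<in> X \<Longrightarrow> vars (\<sigma> x) \<subseteq> Z"
    and st: "wf ar s" "wf ar t" "vars s \<subseteq> Inl ` X \<union> Inr ` C" "vars t \<subseteq> Inl ` X \<union> Inr ` C"
    and uni: "eqr ar E ({} :: (('f, 'z + 'x) trm \<times> ('f, 'z + 'x) trm) set)
       (subst (case_sum (\<lambda>x. ren_l (\<sigma> x)) (\<lambda>c. Var (Inr c))) s)
       (subst (case_sum (\<lambda>x. ren_l (\<sigma> x)) (\<lambda>c. Var (Inr c))) t)"
  shows "eqr ar E (ren_l_rel {(u, v). wf ar u \<and> wf ar v \<and> vars u \<subseteq> X \<and> vars v \<subseteq> X \<and>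
      eqr ar E ({} :: (('f, 'z) trm \<times> ('f, 'z) trm) set) (subst \<sigma> u) (subst \<sigma> v)}) s t"
proof -
  define K0 where "K0 = {(u, v). wf ar u \<and> wf ar v \<and> vars u \<subseteq> X \<and> vars v \<subseteq> X \<and>
      eqr ar E ({} :: (('f, 'z) trm \<times> ('f, 'z) trm) set) (subst \<sigma> u) (subst \<sigma> v)}"
  define RB :: "(('f, 'x + 'x) trm \<times> ('f, 'x + 'x) trm) set" where "RB = ren_l_rel K0"
  define VB where "VB = Inl ` X \<union> Inr ` C"
  define R0 :: "(('f, 'z) trm \<times> ('f, 'z) trm) set" where "R0 = {}"
  define \<tau> where "\<tau> = case_sum (\<lambda>x. ren_l (\<sigma> x)) (\<lambda>c. Var (Inr c) :: ('f, 'z + 'x) trm)"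
  obtain eA :: "'x \<Rightarrow> nat" where eA: "inj_on eA X" using finite_imp_inj_to_nat_seg fin(1) by blast
  obtain eB :: "'x + 'x \<Rightarrow> nat" where eB: "inj_on eB VB"
    using finite_imp_inj_to_nat_seg[of VB] fin(1,2) unfolding VB_def by blast
  obtain eC :: "'z \<Rightarrow> nat" where eC: "inj_on eC Z" using finite_imp_inj_to_nat_seg fin(3) by blast
  define A where "A = QA ar E K0 X eA"
  define B where "B = QA ar E RB VB eB"
  define Cc where "Cc = QA ar E R0 Z eC"
  define encA where "encA = enc ar E K0 X eA"
  define encB where "encB = enc ar E RB VB eB"
  define encC where "encC = enc ar E R0 Z eC"
  define f where "f = (\<lambda>a. encB (subst (Var \<circ> Inl) (dec X eA a)))"
  define g where "g = (\<lambda>a. encC (subst \<sigma> (dec X eA a)))"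
  have gK0: "good ar E K0" using E unfolding good_def K0_def by auto
  have gRB: "good ar E RB" using E unfolding good_def RB_def K0_def ren_l_rel_def by (auto intro: wf_ren_l)
  have gR0: "good ar E R0" using E unfolding good_def R0_def by auto
  have inA: "inK ar E A" unfolding A_def by (rule QA_inK[OF eA gK0])
  have inB: "inK ar E B" unfolding B_def by (rule QA_inK[OF eB gRB])
  have inC: "inK ar E Cc" unfolding Cc_def by (rule QA_inK[OF eC gR0])
  have K0\<sigma>: "eqr ar E R0 (subst \<sigma> a) (subst \<sigma> b)" if "(a, b) \<in> K0" for a b
    using that unfolding K0_def R0_def by auto
  have K0l: "eqr ar E RB (subst (Var \<circ> Inl) a) (subst (Var \<circ> Inl) b)" if "(a, b) \<in> K0" for a b
    using that unfolding RB_def ren_l_rel_def ren_l_def by (auto intro: eqr.base)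
  have homf: "hom ar A B f" unfolding A_def B_def f_def encB_def
    by (rule QA_hom[OF _ _ K0l eA eB]) (auto simp: VB_def)
  have homg: "hom ar A Cc g" unfolding A_def Cc_def g_def encC_def
    by (rule QA_hom[OF \<sigma>(1) \<sigma>(2) K0\<sigma> eA eC])
  have injg: "inj_on g (fst A)"
  proof (rule inj_onI)
    fix a1 a2 assume a: "a1 \<in> fst A" "a2 \<in> fst A" "g a1 = g a2"
    define t1 where "t1 = dec X eA a1"
    define t2 where "t2 = dec X eA a2"
    have t: "a1 = encA t1" "wf ar t1" "vars t1 \<subseteq> X" "a2 = encA t2" "wf ar t2" "vars t2 \<subseteq> X"
      using QA_carrier_enc[OF _ eA] a(1,2) unfolding A_def encA_def t1_def t2_def by blast+
    have w: "wf ar (subst \<sigma> t1)" "vars (subst \<sigma> t1) \<subseteq> Z" "wf ar (subst \<sigma> t2)" "vars (subst \<sigma> t2) \<subseteq> Z"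
      using t \<sigma> by (auto intro!: wf_subst simp: vars_subst) (meson subsetD)+
    have "eqr ar E R0 (subst \<sigma> t1) (subst \<sigma> t2)"
      using a(3) enc_eq_iff[OF eC w, where E=E and R=R0] unfolding g_def encC_def t1_def t2_def by simp
    then have "(t1, t2) \<in> K0" using t unfolding K0_def R0_def by auto
    then have "eqr ar E K0 t1 t2" by (rule eqr.base)
    then show "a1 = a2" using t enc_eq_iff[OF eA t(2,3) t(5,6), where E=E and R=K0] unfolding encA_def by simp
  qed
  obtain D h h' where D: "inK ar E (D :: ('f, ('f, nat) trm) alg)" "hom ar Cc D h" "hom ar B D h'"
    "inj_on h' (fst B)" "\<And>a. a \<in> fst A \<Longrightarrow> h' (f a) = h (g a)"
    using IT[unfolded IT_def, rule_format, of A B Cc f g] inA inB inC homf homg injg by blast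
  have encB_in: "encB u \<in> fst B" if "wf ar u" "vars u \<subseteq> VB" for u
    using that unfolding B_def encB_def QA_def by auto
  have encC_in: "encC (Var z) \<in> fst Cc" if "z \<in> Z" for z
    using that unfolding Cc_def encC_def QA_def by auto
  have encA_in: "encA (Var x) \<in> fst A" if "x \<in> X" for x
    using that unfolding A_def encA_def QA_def by auto
  have sB: "vars s \<subseteq> VB" "vars t \<subseteq> VB" using st unfolding VB_def by auto
  have d0: "h' (encB s) \<in> fst D" using D(3) encB_in st(1) sB unfolding hom_def by auto
  define \<beta> where "\<beta> v = (case v of Inl z \<Rightarrow> if z \<in> Z then h (encC (Var z)) else h' (encB s)
      | Inr c \<Rightarrow> if Inr c \<in> VB then h' (encB (Var (Inr c))) else h' (encB s))" for v
  have \<beta>_in: "\<beta> v \<in> fst D" for v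
    using d0 D(2,3) encC_in encB_in unfolding \<beta>_def hom_def by (auto split: sum.split)
  have algC: "is_alg ar Cc" using inC unfolding inK_def by simp
  have claim: "wf ar u \<Longrightarrow> vars u \<subseteq> VB \<Longrightarrow> eval D \<beta> (subst \<tau> u) = h' (encB u)" for u
  proof (induction u)
    case (Var v)
    show ?case
    proof (cases v)
      case (Inl x)
      then have x: "x \<in> X" using Var unfolding VB_def by auto
      have e1: "eval D \<beta> (subst \<tau> (Var v)) = eval D (\<lambda>z. \<beta> (Inl z)) (\<sigma> x)"
        using Inl by (simp add: \<tau>_def ren_l_def eval_subst)
      have e2: "eval D (\<lambda>z. \<beta> (Inl z)) (\<sigma> x) = eval D (\<lambda>z. h (encC (Var z))) (\<sigma> x)"
        using \<sigma>(2)[OF x] by (intro eval_cong) (auto simp: \<beta>_def)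
      have e3: "h (eval Cc (\<lambda>z. encC (Var z)) (\<sigma> x)) = eval D (\<lambda>z. h (encC (Var z))) (\<sigma> x)"
        using \<sigma>(2)[OF x] by (intro hom_eval[OF D(2) algC \<sigma>(1)] encC_in) auto
      have e4: "eval Cc (\<lambda>z. encC (Var z)) (\<sigma> x) = encC (\<sigma> x)"
        using QA_eval[OF eC \<sigma>(1)[of x], where \<theta>=Var and E=E and R=R0] \<sigma>(2)[OF x]
        unfolding Cc_def encC_def by (auto simp: subst_Var)
      have e5: "encC (\<sigma> x) = g (encA (Var x))"
        using QA_hom_enc[OF \<sigma>(1) K0\<sigma> eA, where t="Var x" and VB=Z and eB=eC] x unfolding g_def encC_def encA_def by simp
      have e6: "h (g (encA (Var x))) = h' (f (encA (Var x)))" using D(5)[OF encA_in[OF x]] by simp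
      have e7: "f (encA (Var x)) = encB (Var (Inl x))"
        unfolding f_def encB_def encA_def
        by (subst QA_hom_enc[where RA=K0 and RB=RB]) (use K0l eA x in auto)
      show ?thesis
        using e1 e2 e3 e4 e5 e6 e7 Inl by simp
    next
      case (Inr c)
      then show ?thesis using Var by (simp add: \<tau>_def \<beta>_def)
    qed
  next
    case (Fun fn us)
    have m: "map (\<lambda>u. eval D \<beta> (subst \<tau> u)) us = map h' (map encB us)"
      using Fun by auto
    have sub: "set (map encB us) \<subseteq> fst B" using Fun.prems by (auto intro!: encB_in)
    have "eval D \<beta> (subst \<tau> (Fun fn us)) = snd D fn (map h' (map encB us))"
      by (simp only: eval.simps subst.simps map_map comp_def m)
    also have "\<dots> = h' (snd B fn (map encB us))"
      using D(3) sub Fun.prems unfolding hom_def by auto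
    also have "snd B fn (map encB us) = encB (Fun fn us)"
      unfolding B_def encB_def by (rule QA_op[OF eB]) (use Fun.prems in auto)
    finally show ?case .
  qed
  have "eval D \<beta> (subst \<tau> s) = eval D \<beta> (subst \<tau> t)"
    unfolding \<tau>_def by (rule sound[where \<beta>=\<beta>, OF D(1) \<beta>_in uni])
  then have "h' (encB s) = h' (encB t)" using claim st sB by simp
  then have "encB s = encB t" using D(4) encB_in st sB unfolding inj_on_def by blast
  then have "eqr ar E RB s t" using enc_eq_iff[OF eB st(1) sB(1) st(2) sB(2), where E=E and R=RB] unfolding encB_def by simp
  then show ?thesis unfolding RB_def K0_def .
qed


lemma pres_mem: "pres ar Y R \<Longrightarrow> (s, t) \<in> R \<Longrightarrow> wf ar s \<and> wf ar t \<and> vars s \<subseteq> Y \<and> vars t \<subseteq> Y"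
  unfolding pres_def by (drule conjunct2, drule bspec, assumption, simp)

theorem mainTheorem9:
  fixes ar :: "'f \<Rightarrow> nat"
    and E :: "(('f, 'v) trm \<times> ('f, 'v) trm) set"
    and X C :: "'x set"
    and RA :: "(('f, 'x + 'x) trm \<times> ('f, 'x + 'x) trm) set"
    and Bs :: "(('f, 'x) trm \<times> ('f, 'x) trm) set list"
  assumes "eqs_wf ar E"
    and "IT ar E TYPE(('f, nat) trm)"
    and "coherent ar E"
    and "forall_fact ar E"
    and "finite X" and "finite C"
    and "pres ar (Inl ` X \<union> Inr ` C) RA"
    and "\<forall>B\<in>set Bs. pres ar X B"
    and "\<forall>B\<in>set Bs. sub_le ar E {} (ren_l_rel B) RA"
    and "\<forall>D. pres ar X D \<and> sub_le ar E {} (ren_l_rel D) RA \<longrightarrow> (\<exists>B\<in>set Bs. sub_le ar E {} D B)"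
  shows "\<forall>(Z :: 'z set) (\<sigma> :: 'x \<Rightarrow> ('f, 'z) trm).
           finite Z \<and> (\<forall>x\<in>X. wf ar (\<sigma> x) \<and> vars (\<sigma> x) \<subseteq> Z) \<longrightarrow>
           (C_unifier ar E RA \<sigma> \<longleftrightarrow> (\<exists>B\<in>set Bs. unifier ar E B \<sigma>))"
proof (intro allI impI)
  fix Z :: "'z set" and \<sigma> :: "'x \<Rightarrow> ('f, 'z) trm"
  assume H: "finite Z \<and> (\<forall>x\<in>X. wf ar (\<sigma> x) \<and> vars (\<sigma> x) \<subseteq> Z)"
  define \<sigma>' where "\<sigma>' x = (if x \<in> X then \<sigma> x else Var undefined)" for x
  have \<sigma>'1: "wf ar (\<sigma>' x)" for x using H unfolding \<sigma>'_def by auto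
  have \<sigma>'2: "x \<in> X \<Longrightarrow> vars (\<sigma>' x) \<subseteq> Z" for x using H unfolding \<sigma>'_def by auto
  have \<sigma>\<sigma>': "vars u \<subseteq> X \<Longrightarrow> subst \<sigma> u = subst \<sigma>' u" for u
    by (rule subst_cong) (auto simp: \<sigma>'_def)
  define \<tau> where "\<tau> = case_sum (\<lambda>x. ren_l (\<sigma> x)) (\<lambda>c. Var (Inr c) :: ('f, 'z + 'x) trm)"
  define \<tau>' where "\<tau>' = case_sum (\<lambda>x. ren_l (\<sigma>' x)) (\<lambda>c. Var (Inr c) :: ('f, 'z + 'x) trm)"
  have \<tau>\<tau>': "vars u \<subseteq> Inl ` X \<union> Inr ` C \<Longrightarrow> subst \<tau> u = subst \<tau>' u" for u
    by (rule subst_cong) (auto simp: \<tau>_def \<tau>'_def \<sigma>'_def)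
  have \<tau>'wf: "wf ar (\<tau>' v)" for v
    using \<sigma>'1 by (auto simp: \<tau>'_def wf_ren_l split: sum.split)
  have RAw: "wf ar s \<and> wf ar t \<and> vars s \<subseteq> Inl ` X \<union> Inr ` C \<and> vars t \<subseteq> Inl ` X \<union> Inr ` C"
    if "(s, t) \<in> RA" for s t using assms(7) that pres_mem by blast
  have finRA: "finite RA" using assms(7) unfolding pres_def by auto
  have Cu: "C_unifier ar E RA \<sigma> \<longleftrightarrow>
      (\<forall>(s, t)\<in>RA. eqr ar E ({} :: (('f, 'z + 'x) trm \<times> ('f, 'z + 'x) trm) set) (subst \<tau>' s) (subst \<tau>' t))"
  proof -
    have "C_unifier ar E RA \<sigma> \<longleftrightarrow>
      (\<forall>(s, t)\<in>RA. eqr ar E ({} :: (('f, 'z + 'x) trm \<times> ('f, 'z + 'x) trm) set) (subst \<tau> s) (subst \<tau> t))"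
      unfolding C_unifier_def Let_def \<tau>_def ..
    also have "\<dots> \<longleftrightarrow> (\<forall>(s, t)\<in>RA. eqr ar E ({} :: (('f, 'z + 'x) trm \<times> ('f, 'z + 'x) trm) set) (subst \<tau>' s) (subst \<tau>' t))"
      using RAw \<tau>\<tau>' by auto
    finally show ?thesis .
  qed
  show "C_unifier ar E RA \<sigma> \<longleftrightarrow> (\<exists>B\<in>set Bs. unifier ar E B \<sigma>)"
  proof
    assume cu: "C_unifier ar E RA \<sigma>"
    define K0 where "K0 = {(u, v). wf ar u \<and> wf ar v \<and> vars u \<subseteq> X \<and> vars v \<subseteq> X \<and>
      eqr ar E ({} :: (('f, 'z) trm \<times> ('f, 'z) trm) set) (subst \<sigma>' u) (subst \<sigma>' v)}"
    have k: "eqr ar E (ren_l_rel K0) s t" if "(s, t) \<in> RA" for s t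
    proof -
      have u: "eqr ar E ({} :: (('f, 'z + 'x) trm \<times> ('f, 'z + 'x) trm) set) (subst \<tau>' s) (subst \<tau>' t)"
        using cu that unfolding Cu by auto
      show ?thesis unfolding K0_def
        by (rule key[OF assms(1,2,5,6) conjunct1[OF H] \<sigma>'1 \<sigma>'2])
           (use RAw[OF that] u in \<open>auto simp: \<tau>'_def\<close>)
    qed
    have "\<forall>p\<in>RA. \<exists>R0. finite R0 \<and> R0 \<subseteq> ren_l_rel K0 \<and> eqr ar E R0 (fst p) (snd p)"
      using k eqr_compact by fastforce
    then obtain F where F: "\<forall>p\<in>RA. finite (F p) \<and> F p \<subseteq> ren_l_rel K0 \<and> eqr ar E (F p) (fst p) (snd p)"
      by (metis bchoice)
    define D0 where "D0 = \<Union> (F ` RA)"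
    have finD0: "finite D0" unfolding D0_def using F finRA by auto
    have D0K: "D0 \<subseteq> ren_l_rel K0" unfolding D0_def using F by auto
    define Dd where "Dd = {p \<in> K0. map_prod ren_l ren_l p \<in> D0}"
    have "finite (map_prod ren_l ren_l -` D0)"
      by (rule finite_vimageI[OF finD0]) (simp add: prod.inj_map ren_l_inj)
    then have finDd: "finite Dd" unfolding Dd_def by (rule rev_finite_subset) auto
    have D0Dd: "D0 \<subseteq> ren_l_rel Dd"
    proof
      fix p assume p: "p \<in> D0"
      then obtain u v where "(u, v) \<in> K0" "p = (ren_l u, ren_l v)"
        using D0K unfolding ren_l_rel_def by auto
      then show "p \<in> ren_l_rel Dd" using p unfolding Dd_def ren_l_rel_def by force
    qed
    have DdK: "Dd \<subseteq> K0" unfolding Dd_def by auto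
    have presD: "pres ar X Dd" unfolding pres_def using finDd DdK unfolding K0_def by auto
    have subD: "sub_le ar E {} (ren_l_rel Dd) RA"
      unfolding sub_le_def
    proof (clarify)
      fix s t assume st: "(s, t) \<in> RA"
      have "eqr ar E (F (s, t)) s t" using F st by auto
      moreover have "F (s, t) \<subseteq> {} \<union> ren_l_rel Dd" using st D0Dd unfolding D0_def by auto
      ultimately show "eqr ar E ({} \<union> ren_l_rel Dd) s t" by (rule eqr_mono)
    qed
    obtain B where B: "B \<in> set Bs" "sub_le ar E {} Dd B" using assms(10) presD subD by blast
    have "unifier ar E B \<sigma>"
      unfolding unifier_def
    proof (clarify)
      fix b1 b2 assume b: "(b1, b2) \<in> B"
      have e: "eqr ar E ({} \<union> Dd) b1 b2" using B(2) b unfolding sub_le_def by auto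
      have "eqr ar E ({} :: (('f, 'z) trm \<times> ('f, 'z) trm) set) (subst \<sigma>' b1) (subst \<sigma>' b2)"
        by (rule eqr_subst[OF e \<sigma>'1]) (use DdK in \<open>auto simp: K0_def\<close>)
      moreover have "pres ar X B" using assms(8) B(1) by blast
      then have "vars b1 \<subseteq> X \<and> vars b2 \<subseteq> X" using b pres_mem by blast
      ultimately show "eqr ar E ({} :: (('f, 'z) trm \<times> ('f, 'z) trm) set) (subst \<sigma> b1) (subst \<sigma> b2)"
        using \<sigma>\<sigma>' by simp
    qed
    then show "\<exists>B\<in>set Bs. unifier ar E B \<sigma>" using B(1) by blast
  next
    assume "\<exists>B\<in>set Bs. unifier ar E B \<sigma>"
    then obtain B where B: "B \<in> set Bs" "unifier ar E B \<sigma>" by blast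
    have Bv: "wf ar b1 \<and> wf ar b2 \<and> vars b1 \<subseteq> X \<and> vars b2 \<subseteq> X" if "(b1, b2) \<in> B" for b1 b2
      using assms(8) B(1) that pres_mem by blast
    show "C_unifier ar E RA \<sigma>"
      unfolding Cu
    proof (clarify)
      fix s t assume st: "(s, t) \<in> RA"
      have e: "eqr ar E ({} \<union> ren_l_rel B) s t" using assms(9) B(1) st unfolding sub_le_def by auto
      show "eqr ar E ({} :: (('f, 'z + 'x) trm \<times> ('f, 'z + 'x) trm) set) (subst \<tau>' s) (subst \<tau>' t)"
      proof (rule eqr_subst[OF e \<tau>'wf])
        fix a b :: "('f, 'x + 'x) trm" assume ab: "(a, b) \<in> {} \<union> ren_l_rel B"
        then obtain b1 b2 where bb: "(b1, b2) \<in> B" "a = ren_l b1" "b = ren_l b2"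
          unfolding ren_l_rel_def by auto
        have sl: "subst \<tau>' (ren_l u) = ren_l (subst \<sigma>' u)" for u
          unfolding ren_l_def subst_subst by (rule subst_cong) (simp add: \<tau>'_def ren_l_def)
        have "eqr ar E ({} :: (('f, 'z) trm \<times> ('f, 'z) trm) set) (subst \<sigma> b1) (subst \<sigma> b2)"
          using B(2) bb(1) unfolding unifier_def by auto
        then have "eqr ar E ({} :: (('f, 'z) trm \<times> ('f, 'z) trm) set) (subst \<sigma>' b1) (subst \<sigma>' b2)"
          using \<sigma>\<sigma>' Bv[OF bb(1)] by simp
        then have "eqr ar E ({} :: (('f, 'z + 'x) trm \<times> ('f, 'z + 'x) trm) set)
            (subst (Var \<circ> Inl) (subst \<sigma>' b1)) (subst (Var \<circ> Inl) (subst \<sigma>' b2))"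
          by (rule eqr_subst) auto
        then show "eqr ar E ({} :: (('f, 'z + 'x) trm \<times> ('f, 'z + 'x) trm) set) (subst \<tau>' a) (subst \<tau>' b)"
          unfolding bb sl by (simp add: ren_l_def)
      qed
    qed
  qed
qed

end
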